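(* For every $g\geqslant 2$ there exists a complex two-dimensional family of compact Riemann surfaces of genus $g$ admitting a group of automorphisms isomorphic to the dihedral group $\mathbf{D}_{2(g-1)}=\langle r,s: r^{2(g-1)}=s^2=(sr)^2=1\rangle$ of order $4g-4$ acting with signature $(0;2,2,2,2,2)$. If moreover $g-1$ is prime, then any two actions of $\mathbf{D}_{2(g-1)}$ with signature $(0;2,2,2,2,2)$ on surfaces of genus $g$ are topologically equivalent, i.e. the family is equisymmetric; every such action is equivalent to the one given by $x_1\mapsto s,\ x_2\mapsto s,\ x_3\mapsto sr^{g},\ x_4\mapsto sr,\ x_5\mapsto r^{g-1}$ on $\Delta=\langle x_1,\dots,x_5: x_i^2=1,\ x_1x_2x_3x_4x_5=1\rangle$.
   Context: A finite group $G$ acts on a compact Riemann surface $S$ with signature $(h; m_1,\dots,m_l)$ if $G$ embeds in $\mathrm{Aut}(S)$, the quotient $S/G$ has genus $h$, and the branched regular covering $S \to S/G$ has exactly $l$ branch values with branch orders $m_1,\dots,m_l$; equivalently there is a Fuchsian group $\Delta$ of that signature and an epimorphism $\Delta\to G$ whose kernel is a surface group uniformizing $S$. Two actions $\psi_1,\psi_2:G\to\mathrm{Aut}(S)$ are topologically equivalent if there exist $\omega\in\mathrm{Aut}(G)$ and an orientation-preserving homeomorphism $f$ of $S$ with $\psi_2(x)=f\psi_1(\omega(x))f^{-1}$ for all $x\in G$; for genus-zero quotients this corresponds to epimorphisms in the same orbit under $\mathrm{Aut}(G)$ and braid transformations of $\Delta$. *)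

theory Defs
  imports "HOL-Algebra.Algebra" "HOL-Computational_Algebra.Primes"
begin

text \<open>Concrete dihedral group of order 2n: the pair (a, e) stands for r^a s^e
  (a < n, e = True meaning one factor s), with s r = r^(-1) s.
  Multiplication: r^a s^e * r^b s^f = r^(a +- b) s^(e+f).\<close>
definition dihedral :: "nat \<Rightarrow> (nat \<times> bool) monoid" where
  "dihedral n = \<lparr> carrier = {0..<n} \<times> UNIV,
     monoid.mult = (\<lambda>(a, e) (b, f). ((if e then a + n - b else a + b) mod n, e \<noteq> f)),
     monoid.one = (0, False) \<rparr>"

definition rot :: "nat \<Rightarrow> nat \<Rightarrow> nat \<times> bool" where
  "rot n k = (k mod n, False)"

definition srot :: "nat \<Rightarrow> nat \<Rightarrow> nat \<times> bool" where
  "srot n k = ((n - k mod n) mod n, True)"   \<comment> \<open>s r^k = r^(-k) s; srot n 0 = s\<close>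

definition list_prod :: "('a, 'b) monoid_scheme \<Rightarrow> 'a list \<Rightarrow> 'a" where
  "list_prod G xs = foldr (\<lambda>x y. x \<otimes>\<^bsub>G\<^esub> y) xs \<one>\<^bsub>G\<^esub>"

text \<open>Generating vectors of signature (0;2,2,2,2,2): images (a1,...,a5) of x1,...,x5
  under an epimorphism Delta -> G with surface kernel: each a_i has order exactly 2,
  a1...a5 = 1, and the a_i generate G.\<close>
definition gen_vector_02222 :: "('a, 'b) monoid_scheme \<Rightarrow> 'a list \<Rightarrow> bool" where
  "gen_vector_02222 G v \<longleftrightarrow> length v = 5 \<and> set v \<subseteq> carrier G
     \<and> (\<forall>x\<in>set v. x \<noteq> \<one>\<^bsub>G\<^esub> \<and> x \<otimes>\<^bsub>G\<^esub> x = \<one>\<^bsub>G\<^esub>)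
     \<and> list_prod G v = \<one>\<^bsub>G\<^esub>
     \<and> generate G (set v) = carrier G"

text \<open>Standard braid (Hurwitz) move sigma_i on a vector (indices from 0).\<close>
definition braid_move :: "('a, 'b) monoid_scheme \<Rightarrow> nat \<Rightarrow> 'a list \<Rightarrow> 'a list" where
  "braid_move G i v = v[i := v ! i \<otimes>\<^bsub>G\<^esub> v ! (Suc i) \<otimes>\<^bsub>G\<^esub> inv\<^bsub>G\<^esub> (v ! i), Suc i := v ! i]"

definition equiv_step :: "('a, 'b) monoid_scheme \<Rightarrow> 'a list \<Rightarrow> 'a list \<Rightarrow> bool" where
  "equiv_step G v w \<longleftrightarrow> set v \<subseteq> carrier G \<and> set w \<subseteq> carrier G \<and>
     ((\<exists>\<phi>\<in>iso G G. w = map \<phi> v) \<or> (\<exists>i. Suc i < length v \<and> w = braid_move G i v))"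

text \<open>Topological equivalence of actions with genus-0 quotient: same orbit under
  Aut(G) and the braid group.\<close>
definition top_equiv :: "('a, 'b) monoid_scheme \<Rightarrow> 'a list \<Rightarrow> 'a list \<Rightarrow> bool" where
  "top_equiv G = equivclp (equiv_step G)"

end

theory Submission
  imports Defs
begin

definition el :: "nat \<Rightarrow> int \<Rightarrow> bool \<Rightarrow> nat \<times> bool" where
  "el n a e = (nat (a mod int n), e)"

lemma el_eq_iff: "0 < n \<Longrightarrow> el n a e = el n b f \<longleftrightarrow> a mod int n = b mod int n \<and> e = f"
  unfolding el_def by (auto simp: eq_nat_nat_iff)

lemma el_cong: "0 < n \<Longrightarrow> int n dvd (a - b) \<Longrightarrow> el n a e = el n b e"
  by (simp add: el_eq_iff mod_eq_dvd_iff)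

lemma carrier_dih: "carrier (dihedral n) = {0..<n} \<times> UNIV"
  by (simp add: dihedral_def)

lemma one_dih: "\<one>\<^bsub>dihedral n\<^esub> = el n 0 False"
  by (simp add: dihedral_def el_def)

lemma el_carrier: "0 < n \<Longrightarrow> el n a e \<in> carrier (dihedral n)"
  by (simp add: carrier_dih el_def nat_less_iff)

lemma carrier_el: "x \<in> carrier (dihedral n) \<Longrightarrow> x = el n (int (fst x)) (snd x)"
  by (cases x) (simp add: carrier_dih el_def)

lemma el_mult: assumes "0 < n"
  shows "el n a e \<otimes>\<^bsub>dihedral n\<^esub> el n b f = el n (if e then a - b else a + b) (e \<noteq> f)"
proof -
  have b: "nat (b mod int n) < n" using assms by (simp add: nat_less_iff)
  have A: "int (nat (a mod int n)) = a mod int n" "int (nat (b mod int n)) = b mod int n"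
    using assms by auto
  show ?thesis
  proof (cases e)
    case True
    have "int ((nat (a mod int n) + n - nat (b mod int n)) mod n) = (a - b) mod int n"
    proof -
      have "int ((nat (a mod int n) + n - nat (b mod int n)) mod n) = (a mod int n - b mod int n + int n) mod int n"
        using b A by (simp add: of_nat_mod of_nat_diff algebra_simps)
      also have "\<dots> = (a - b) mod int n" by (simp add: mod_diff_eq)
      finally show ?thesis .
    qed
    then show ?thesis using True by (simp add: dihedral_def el_def)
  next
    case False
    have "int ((nat (a mod int n) + nat (b mod int n)) mod n) = (a + b) mod int n"
      using A by (simp add: of_nat_mod mod_simps)
    then show ?thesis using False by (simp add: dihedral_def el_def)
  qed
qed

lemma dih_cases: "x \<in> carrier (dihedral n) \<Longrightarrow> (\<And>a e. x = el n a e \<Longrightarrow> P) \<Longrightarrow> P"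
  using carrier_el by blast

lemma group_dih: assumes "0 < n" shows "group (dihedral n)"
proof (rule groupI)
  fix x y assume "x \<in> carrier (dihedral n)" "y \<in> carrier (dihedral n)"
  then show "x \<otimes>\<^bsub>dihedral n\<^esub> y \<in> carrier (dihedral n)"
    by (elim dih_cases) (simp add: el_mult assms el_carrier)
next
  show "\<one>\<^bsub>dihedral n\<^esub> \<in> carrier (dihedral n)" by (simp add: one_dih el_carrier assms)
next
  fix x y z assume "x \<in> carrier (dihedral n)" "y \<in> carrier (dihedral n)" "z \<in> carrier (dihedral n)"
  then show "x \<otimes>\<^bsub>dihedral n\<^esub> y \<otimes>\<^bsub>dihedral n\<^esub> z = x \<otimes>\<^bsub>dihedral n\<^esub> (y \<otimes>\<^bsub>dihedral n\<^esub> z)"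
    by (elim dih_cases) (auto simp add: el_mult assms algebra_simps)
next
  fix x assume "x \<in> carrier (dihedral n)"
  then show "\<one>\<^bsub>dihedral n\<^esub> \<otimes>\<^bsub>dihedral n\<^esub> x = x"
    by (elim dih_cases) (simp add: el_mult assms one_dih)
next
  fix x assume "x \<in> carrier (dihedral n)"
  then show "\<exists>y\<in>carrier (dihedral n). y \<otimes>\<^bsub>dihedral n\<^esub> x = \<one>\<^bsub>dihedral n\<^esub>"
  proof (elim dih_cases)
    fix a e assume x: "x = el n a e"
    show ?thesis
      by (rule bexI[of _ "el n (if e then a else - a) e"]) (auto simp: x el_mult assms one_dih el_carrier)
  qed
qed

lemma inv_el: assumes "0 < n" shows "inv\<^bsub>dihedral n\<^esub> (el n a e) = el n (if e then a else - a) e"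
  by (rule group.inv_equality[OF group_dih[OF assms]]) (auto simp: el_mult assms one_dih el_carrier)

abbreviation D :: "nat \<Rightarrow> (nat \<times> bool) monoid" where "D n \<equiv> dihedral n"

lemma te_refl: "top_equiv G v v"
  unfolding top_equiv_def by simp

lemma te_sym: "top_equiv G v w \<Longrightarrow> top_equiv G w v"
  unfolding top_equiv_def by (rule equivclp_sym)

lemma te_trans: "top_equiv G u v \<Longrightarrow> top_equiv G v w \<Longrightarrow> top_equiv G u w"
  unfolding top_equiv_def by (rule equivclp_trans)

lemma te_braid: assumes "0 < n" "set v \<subseteq> carrier (D n)" "Suc i < length v"
  shows "top_equiv (D n) v (braid_move (D n) i v)"
proof -
  interpret group "D n" using group_dih[OF assms(1)] .
  have c1: "v ! i \<in> carrier (D n)" "v ! Suc i \<in> carrier (D n)" using assms by auto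
  have "set (braid_move (D n) i v) \<subseteq> carrier (D n)"
    unfolding braid_move_def
    by (intro set_update_subsetI) (use assms c1 in auto)
  then show ?thesis unfolding top_equiv_def
    by (intro r_into_equivclp) (unfold equiv_step_def, use assms in blast)
qed

lemma te_iso: assumes "\<phi> \<in> iso (D n) (D n)" "set v \<subseteq> carrier (D n)"
  shows "top_equiv (D n) v (map \<phi> v)"
proof -
  have "set (map \<phi> v) \<subseteq> carrier (D n)" using assms
    by (auto simp: iso_def hom_def Pi_def)
  then show ?thesis unfolding top_equiv_def
    by (intro r_into_equivclp) (auto simp: equiv_step_def assms)
qed

definition autm :: "nat \<Rightarrow> int \<Rightarrow> int \<Rightarrow> nat \<times> bool \<Rightarrow> nat \<times> bool" where
  "autm n u t x = el n (u * int (fst x) + (if snd x then t else 0)) (snd x)"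

lemma autm_el: assumes "0 < n"
  shows "autm n u t (el n a e) = el n (u * a + (if e then t else 0)) e"
proof -
  have "int (fst (el n a e)) = a mod int n" using assms by (simp add: el_def)
  moreover have "int n dvd (u * (a mod int n) + (if e then t else 0)) - (u * a + (if e then t else 0))"
  proof -
    have "int n dvd (a mod int n - a)" by (simp add: mod_eq_dvd_iff[symmetric])
    then have "int n dvd u * (a mod int n - a)" by simp
    then show ?thesis by (simp add: algebra_simps)
  qed
  ultimately show ?thesis unfolding autm_def using el_cong[OF assms] by (simp add: el_def)
qed

lemma autm_iso: assumes "0 < n" "int n dvd (w * u - 1)"
  shows "autm n u t \<in> iso (D n) (D n)"
proof (rule isoI)
  show "autm n u t \<in> hom (D n) (D n)"
  proof (rule homI)
    fix x assume "x \<in> carrier (D n)"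
    then show "autm n u t x \<in> carrier (D n)" by (simp add: autm_def el_carrier assms)
  next
    fix x y assume "x \<in> carrier (D n)" "y \<in> carrier (D n)"
    then show "autm n u t (x \<otimes>\<^bsub>D n\<^esub> y) = autm n u t x \<otimes>\<^bsub>D n\<^esub> autm n u t y"
      by (elim dih_cases) (auto simp: el_mult autm_el assms algebra_simps)
  qed
next
  have inj: "inj_on (autm n u t) (carrier (D n))"
  proof (rule inj_onI)
    fix x y assume xy: "x \<in> carrier (D n)" "y \<in> carrier (D n)" "autm n u t x = autm n u t y"
    from xy(1) obtain a e where x: "x = el n a e" by (rule dih_cases)
    from xy(2) obtain b f where y: "y = el n b f" by (rule dih_cases)
    from xy(3) have H: "(u * a + (if e then t else 0)) mod int n = (u * b + (if f then t else 0)) mod int n \<and> e = f"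
      unfolding x y autm_el[OF assms(1)] el_eq_iff[OF assms(1)] .
    then have ef: "e = f" and m: "(u * a + (if e then t else 0)) mod int n = (u * b + (if f then t else 0)) mod int n"
      by blast+
    from m ef have "int n dvd u * (a - b)" by (simp add: mod_eq_dvd_iff algebra_simps)
    then have "int n dvd w * (u * (a - b))" by simp
    moreover have "int n dvd (w * u - 1) * (a - b)" using assms(2) by simp
    ultimately have "int n dvd w * (u * (a - b)) - (w * u - 1) * (a - b)" by (rule dvd_diff)
    then have "int n dvd (a - b)" by (simp add: algebra_simps)
    then show "x = y" using x y ef el_cong[OF assms(1)] by simp
  qed
  moreover have "autm n u t ` carrier (D n) \<subseteq> carrier (D n)"
    by (auto simp: autm_def el_carrier assms)
  moreover have "finite (carrier (D n))" by (simp add: carrier_dih)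
  ultimately show "bij_betw (autm n u t) (carrier (D n)) (carrier (D n))"
    using endo_inj_surj[of "carrier (D n)" "autm n u t"] by (simp add: bij_betw_def)
qed

definition st :: "nat \<Rightarrow> int \<Rightarrow> int \<Rightarrow> int \<Rightarrow> int \<Rightarrow> (nat \<times> bool) list" where
  "st p c1 c2 c3 c4 = [el (2*p) c1 True, el (2*p) c2 True, el (2*p) c3 True, el (2*p) c4 True, el (2*p) (int p) False]"

lemma st_carrier: "0 < p \<Longrightarrow> set (st p c1 c2 c3 c4) \<subseteq> carrier (D (2*p))"
  by (simp add: st_def el_carrier)

lemma st_cong: assumes "0 < p" "2 * int p dvd c1 - d1" "2 * int p dvd c2 - d2" "2 * int p dvd c3 - d3" "2 * int p dvd c4 - d4"
  shows "st p c1 c2 c3 c4 = st p d1 d2 d3 d4"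
  using assms el_cong[of "2*p"] by (simp add: st_def)

lemma b0: assumes "0 < p" shows "top_equiv (D (2*p)) (st p c1 c2 c3 c4) (st p (2 * c1 - c2) c1 c3 c4)"
proof -
  have "braid_move (D (2*p)) 0 (st p c1 c2 c3 c4) = st p (c1 - c2 + c1) c1 c3 c4"
    using assms by (simp add: braid_move_def st_def el_mult inv_el)
  also have "\<dots> = st p (2 * c1 - c2) c1 c3 c4" by (simp add: algebra_simps)
  finally show ?thesis using te_braid[of "2*p" "st p c1 c2 c3 c4" 0] assms st_carrier[OF assms]
    by (simp add: st_def)
qed

lemma b1: assumes "0 < p" shows "top_equiv (D (2*p)) (st p c1 c2 c3 c4) (st p c1 (2 * c2 - c3) c2 c4)"
proof -
  have "braid_move (D (2*p)) 1 (st p c1 c2 c3 c4) = st p c1 (c2 - c3 + c2) c2 c4"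
    using assms by (simp add: braid_move_def st_def el_mult inv_el)
  also have "\<dots> = st p c1 (2 * c2 - c3) c2 c4" by (simp add: algebra_simps)
  finally show ?thesis using te_braid[of "2*p" "st p c1 c2 c3 c4" 1] assms st_carrier[OF assms]
    by (simp add: st_def)
qed

lemma b2: assumes "0 < p" shows "top_equiv (D (2*p)) (st p c1 c2 c3 c4) (st p c1 c2 (2 * c3 - c4) c3)"
proof -
  have "braid_move (D (2*p)) 2 (st p c1 c2 c3 c4) = st p c1 c2 (c3 - c4 + c3) c3"
    using assms by (simp add: braid_move_def st_def el_mult inv_el numeral_eq_Suc)
  also have "\<dots> = st p c1 c2 (2 * c3 - c4) c3" by (simp add: algebra_simps)
  finally show ?thesis using te_braid[of "2*p" "st p c1 c2 c3 c4" 2] assms st_carrier[OF assms]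
    by (simp add: st_def)
qed

lemma it0_nat: assumes "0 < p"
  shows "top_equiv (D (2*p)) (st p c1 c2 c3 c4) (st p (c1 + int k * (c1 - c2)) (c2 + int k * (c1 - c2)) c3 c4)"
proof (induction k)
  case 0 then show ?case by (simp add: te_refl)
next
  case (Suc k)
  have "top_equiv (D (2*p)) (st p (c1 + int k * (c1 - c2)) (c2 + int k * (c1 - c2)) c3 c4)
     (st p (2 * (c1 + int k * (c1 - c2)) - (c2 + int k * (c1 - c2))) (c1 + int k * (c1 - c2)) c3 c4)"
    by (rule b0[OF assms])
  also have "st p (2 * (c1 + int k * (c1 - c2)) - (c2 + int k * (c1 - c2))) (c1 + int k * (c1 - c2)) c3 c4
    = st p (c1 + int (Suc k) * (c1 - c2)) (c2 + int (Suc k) * (c1 - c2)) c3 c4"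
    by (simp add: algebra_simps)
  finally show ?case using Suc te_trans by blast
qed

lemma it1_nat: assumes "0 < p"
  shows "top_equiv (D (2*p)) (st p c1 c2 c3 c4) (st p c1 (c2 + int k * (c2 - c3)) (c3 + int k * (c2 - c3)) c4)"
proof (induction k)
  case 0 then show ?case by (simp add: te_refl)
next
  case (Suc k)
  have "top_equiv (D (2*p)) (st p c1 (c2 + int k * (c2 - c3)) (c3 + int k * (c2 - c3)) c4)
     (st p c1 (2 * (c2 + int k * (c2 - c3)) - (c3 + int k * (c2 - c3))) (c2 + int k * (c2 - c3)) c4)"
    by (rule b1[OF assms])
  also have "st p c1 (2 * (c2 + int k * (c2 - c3)) - (c3 + int k * (c2 - c3))) (c2 + int k * (c2 - c3)) c4
    = st p c1 (c2 + int (Suc k) * (c2 - c3)) (c3 + int (Suc k) * (c2 - c3)) c4"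
    by (simp add: algebra_simps)
  finally show ?case using Suc te_trans by blast
qed

lemma nat_mod_rep: assumes "0 < p" shows "2 * int p dvd k * d - int (nat (k mod (2 * int p))) * d"
proof -
  have "int (nat (k mod (2 * int p))) = k mod (2 * int p)" using assms by simp
  moreover have "2 * int p dvd k - k mod (2 * int p)" by (simp add: mod_eq_dvd_iff[symmetric])
  then have "2 * int p dvd (k - k mod (2 * int p)) * d" by simp
  ultimately show ?thesis by (simp add: algebra_simps)
qed

lemma it0: assumes "0 < p"
  shows "top_equiv (D (2*p)) (st p c1 c2 c3 c4) (st p (c1 + k * (c1 - c2)) (c2 + k * (c1 - c2)) c3 c4)"
proof -
  let ?k = "nat (k mod (2 * int p))"
  have "st p (c1 + int ?k * (c1 - c2)) (c2 + int ?k * (c1 - c2)) c3 c4 = st p (c1 + k * (c1 - c2)) (c2 + k * (c1 - c2)) c3 c4"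
    by (rule st_cong[OF assms]) (use nat_mod_rep[OF assms, of k "c1 - c2"] dvd_minus_iff in \<open>auto simp: algebra_simps\<close>)
  then show ?thesis using it0_nat[OF assms, of c1 c2 c3 c4 ?k] by simp
qed

lemma it1: assumes "0 < p"
  shows "top_equiv (D (2*p)) (st p c1 c2 c3 c4) (st p c1 (c2 + k * (c2 - c3)) (c3 + k * (c2 - c3)) c4)"
proof -
  let ?k = "nat (k mod (2 * int p))"
  have "st p c1 (c2 + int ?k * (c2 - c3)) (c3 + int ?k * (c2 - c3)) c4 = st p c1 (c2 + k * (c2 - c3)) (c3 + k * (c2 - c3)) c4"
    by (rule st_cong[OF assms]) (use nat_mod_rep[OF assms, of k "c2 - c3"] dvd_minus_iff in \<open>auto simp: algebra_simps\<close>)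
  then show ?thesis using it1_nat[OF assms, of c1 c2 c3 c4 ?k] by simp
qed

lemma aut_st: assumes "0 < p" "2 * int p dvd (w * u - 1)"
  shows "top_equiv (D (2*p)) (st p c1 c2 c3 c4) (st p (u * c1 + t) (u * c2 + t) (u * c3 + t) (u * c4 + t))"
proof -
  have "2 dvd w * u - 1" using assms(2) dvd_mult_left by blast
  then have "odd (w * u)" by simp
  then have "odd u" by simp
  then obtain j where "u = 2 * j + 1" by (metis oddE)
  then have "2 * int p dvd u * int p - int p" by (simp add: algebra_simps)
  then have z: "el (2*p) (u * int p) False = el (2*p) (int p) False"
    using el_cong[of "2*p"] assms(1) by simp
  have "map (autm (2*p) u t) (st p c1 c2 c3 c4) = st p (u * c1 + t) (u * c2 + t) (u * c3 + t) (u * c4 + t)"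
    using assms(1) z by (simp add: st_def autm_el)
  moreover have "autm (2*p) u t \<in> iso (D (2*p)) (D (2*p))"
    by (rule autm_iso[of _ w]) (use assms in auto)
  ultimately show ?thesis using te_iso st_carrier[OF assms(1)] by metis
qed

definition canon :: "nat \<Rightarrow> (nat \<times> bool) list" where
  "canon p = st p 0 0 (- (int p + 1)) (-1)"

lemma F1: assumes p: "0 < p" and P: "2 * int p dvd (c1 - c2 + c3 - c4 - int p)"
  and W: "2 * int p dvd (w * (c2 - c3) - 1)"
  shows "top_equiv (D (2*p)) (st p c1 c2 c3 c4) (canon p)"
proof -
  define d1 where "d1 = c1 - c2"
  define d2 where "d2 = c2 - c3"
  define k where "k = d1 * w"
  have s1: "top_equiv (D (2*p)) (st p c1 c2 c3 c4) (st p c1 (c2 + k * d2) (c3 + k * d2) c4)"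
    using it1[OF p] d2_def by simp
  have W': "2 * int p dvd (d2 * w - 1)" using W d2_def by (simp add: mult.commute)
  have s2: "top_equiv (D (2*p)) (st p c1 (c2 + k * d2) (c3 + k * d2) c4)
     (st p (w * c1 + (- w * c1)) (w * (c2 + k * d2) + (- w * c1)) (w * (c3 + k * d2) + (- w * c1)) (w * c4 + (- w * c1)))"
    by (rule aut_st[OF p W'])
  have "2 dvd w * d2 - 1" using W d2_def dvd_mult_left by blast
  then have "odd w" by simp
  then obtain j where j: "w = 2 * j + 1" by (metis oddE)
  have WW: "2 * int p dvd w * d2 - 1" using W d2_def by simp
  have e2: "2 * int p dvd (w * (c2 + k * d2) + (- w * c1)) - 0"
  proof -
    have "(w * (c2 + k * d2) + (- w * c1)) - 0 = w * d1 * (w * d2 - 1)"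
      by (simp add: k_def d1_def algebra_simps)
    then show ?thesis using WW by simp
  qed
  have e3: "2 * int p dvd (w * (c3 + k * d2) + (- w * c1)) - (-1)"
  proof -
    have H: "(w * (c3 + k * d2) + (- w * c1)) - (-1) = w * d1 * (w * d2 - 1) - (w * d2 - 1)"
      by (simp add: k_def d1_def d2_def algebra_simps)
    have "2 * int p dvd w * d1 * (w * d2 - 1) - (w * d2 - 1)"
      by (rule dvd_diff) (use WW in auto)
    then show ?thesis unfolding H .
  qed
  have e4: "2 * int p dvd (w * c4 + (- w * c1)) - (-1 - int p)"
  proof -
    have H: "(w * c4 + (- w * c1)) - (-1 - int p) = - w * (c1 - c2 + c3 - c4 - int p) - (w * d2 - 1) - 2 * int p * j"
      by (simp add: j d2_def algebra_simps)
    have "2 * int p dvd - w * (c1 - c2 + c3 - c4 - int p) - (w * d2 - 1) - 2 * int p * j"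
      using dvd_diff[OF dvd_diff[OF dvd_mult[OF P, of "-w"] WW], of "2 * int p * j"] by simp
    then show ?thesis unfolding H .
  qed
  have s3: "st p (w * c1 + (- w * c1)) (w * (c2 + k * d2) + (- w * c1)) (w * (c3 + k * d2) + (- w * c1)) (w * c4 + (- w * c1))
     = st p 0 0 (-1) (-1 - int p)"
    by (rule st_cong[OF p]) (use e2 e3 e4 in auto)
  have s4: "top_equiv (D (2*p)) (st p 0 0 (-1) (-1 - int p)) (st p 0 0 (2 * (-1) - (-1 - int p)) (-1))"
    by (rule b2[OF p])
  have s5: "st p 0 0 (2 * (-1) - (-1 - int p)) (-1) = canon p"
    unfolding canon_def by (rule st_cong[OF p]) auto
  show ?thesis using s1 s2 s3 s4 s5 te_trans by metis
qed

lemma unitU: assumes pr: "Factorial_Ring.prime p" and o: "odd x" and nd: "\<not> int p dvd x"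
  shows "\<exists>w. 2 * int p dvd (w * x - 1)"
proof -
  have pi: "Factorial_Ring.prime (int p)" using pr by (simp add: prime_nat_int_transfer)
  have c1: "coprime (int p) x" by (rule prime_imp_coprime[OF pi nd])
  have c2: "coprime 2 x" using o by simp
  have "coprime (2 * int p) x" using c1 c2 by simp
  then have g: "gcd x (2 * int p) = 1" by (simp add: coprime_commute coprime_iff_gcd_eq_1)
  obtain u v where "u * x + v * (2 * int p) = gcd x (2 * int p)" using bezout_int by blast
  then have "u * x - 1 = 2 * int p * (- v)" using g by (simp add: algebra_simps)
  then show ?thesis by (metis dvd_triv_left)
qed

lemma F1': assumes p: "0 < p" and pr: "Factorial_Ring.prime p" and P: "2 * int p dvd (c1 - c2 + c3 - c4 - int p)"
  and o: "odd (c2 - c3)" and nd: "\<not> int p dvd (c2 - c3)"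
  shows "top_equiv (D (2*p)) (st p c1 c2 c3 c4) (canon p)"
  using unitU[OF pr o nd] F1[OF p P] by blast

lemma F2: assumes p: "0 < p" and P: "2 * int p dvd (c1 - c2 + c3 - c4 - int p)"
  and W: "2 * int p dvd (w * (c1 - c2) - 1)"
  shows "top_equiv (D (2*p)) (st p c1 c2 c3 c4) (canon p)"
proof -
  define k where "k = (1 - (c2 - c3)) * w"
  have s1: "top_equiv (D (2*p)) (st p c1 c2 c3 c4) (st p (c1 + k * (c1 - c2)) (c2 + k * (c1 - c2)) c3 c4)"
    by (rule it0[OF p])
  have H: "1 * ((c2 + k * (c1 - c2)) - c3) - 1 = (1 - (c2 - c3)) * (w * (c1 - c2) - 1)"
    by (simp add: k_def algebra_simps)
  have W': "2 * int p dvd 1 * ((c2 + k * (c1 - c2)) - c3) - 1"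
    unfolding H using W by simp
  have P': "2 * int p dvd ((c1 + k * (c1 - c2)) - (c2 + k * (c1 - c2)) + c3 - c4 - int p)"
    using P by simp
  show ?thesis using F1[OF p P' W'] s1 te_trans by blast
qed

lemma F2': assumes p: "0 < p" and pr: "Factorial_Ring.prime p" and P: "2 * int p dvd (c1 - c2 + c3 - c4 - int p)"
  and o: "odd (c1 - c2)" and nd: "\<not> int p dvd (c1 - c2)"
  shows "top_equiv (D (2*p)) (st p c1 c2 c3 c4) (canon p)"
  using unitU[OF pr o nd] F2[OF p P] by blast

lemma prime_odd2: "Factorial_Ring.prime (p::nat) \<Longrightarrow> p \<noteq> 2 \<Longrightarrow> odd (int p)"
  by (metis of_nat_numeral even_of_nat two_is_prime_nat primes_dvd_imp_eq)

lemma F3: assumes p: "0 < p" and pr: "Factorial_Ring.prime p" and P: "2 * int p dvd (c1 - c2 + c3 - c4 - int p)"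
  and g: "\<not> (int p dvd (c1 - c2) \<and> int p dvd (c2 - c3))"
  shows "top_equiv (D (2*p)) (st p c1 c2 c3 c4) (canon p)"
proof -
  obtain m where m: "c1 - c2 + c3 - c4 - int p = 2 * int p * m" using P by (elim dvdE)
  then have c4: "c4 = c1 - c2 + c3 - int p - 2 * int p * m" by simp
  have P2: "\<And>x1 x2 x3 x4. x1 - x2 + x3 - x4 = c1 - c2 + c3 - c4 \<Longrightarrow> 2 * int p dvd (x1 - x2 + x3 - x4 - int p)"
    using P by simp
  show ?thesis
  proof (cases "odd (c2 - c3) \<and> \<not> int p dvd (c2 - c3)")
    case True then show ?thesis using F1'[OF p pr P] by blast
  next
    case nU2: False
    show ?thesis
    proof (cases "odd (c1 - c2) \<and> \<not> int p dvd (c1 - c2)")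
      case True then show ?thesis using F2'[OF p pr P] by blast
    next
      case nU1: False
      show ?thesis
      proof (cases "int p dvd (c1 - c2)")
        case False
        then have e1: "even (c1 - c2)" using nU1 by blast
        have "p \<noteq> 2" using False e1 by (metis of_nat_numeral)
        then have op: "odd (int p)" using prime_odd2[OF pr] by blast
        show ?thesis
        proof (cases "even (c2 - c3)")
          case e2: True
          show ?thesis
          proof (cases "int p dvd (c1 - c3)")
            case False
            have s1: "top_equiv (D (2*p)) (st p c1 c2 c3 c4) (st p c1 c2 (2 * c3 - c4) c3)" by (rule b2[OF p])
            have H: "c2 - (2 * c3 - c4) = (c1 - c2) + (c2 - c3) + int p * (-1 - 2 * m)"
              by (simp add: c4 algebra_simps)
            have o: "odd (c2 - (2 * c3 - c4))" unfolding H using e1 e2 op by simp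
            have nd: "\<not> int p dvd (c2 - (2 * c3 - c4))" unfolding H using False by (simp add: zdvd_reduce)
            have "top_equiv (D (2*p)) (st p c1 c2 (2 * c3 - c4) c3) (canon p)"
              by (rule F1'[OF p pr _ o nd]) (rule P2, simp)
            then show ?thesis using s1 te_trans by blast
          next
            case True
            have s1: "top_equiv (D (2*p)) (st p c1 c2 c3 c4) (st p (2 * c1 - c2) c1 c3 c4)" by (rule b0[OF p])
            have s2: "top_equiv (D (2*p)) (st p (2 * c1 - c2) c1 c3 c4) (st p (2 * c1 - c2) c1 (2 * c3 - c4) c3)" by (rule b2[OF p])
            have H: "c1 - (2 * c3 - c4) = (c1 - c2) + (c1 - c3) + int p * (-1 - 2 * m)"
              by (simp add: c4 algebra_simps)
            have o: "odd (c1 - (2 * c3 - c4))" unfolding H using e1 e2 op by simp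
            have nd: "\<not> int p dvd (c1 - (2 * c3 - c4))" unfolding H zdvd_reduce dvd_add_left_iff[OF True] using False .
            have "top_equiv (D (2*p)) (st p (2 * c1 - c2) c1 (2 * c3 - c4) c3) (canon p)"
              by (rule F1'[OF p pr _ o nd]) (rule P2, simp)
            then show ?thesis using s1 s2 te_trans by blast
          qed
        next
          case o2: False
          then have d2: "int p dvd (c2 - c3)" using nU2 by blast
          have s1: "top_equiv (D (2*p)) (st p c1 c2 c3 c4) (st p (2 * c1 - c2) c1 c3 c4)" by (rule b0[OF p])
          have H: "c1 - c3 = (c1 - c2) + (c2 - c3)" by simp
          have o: "odd (c1 - c3)" unfolding H using e1 o2 by simp
          have nd: "\<not> int p dvd (c1 - c3)" unfolding H dvd_add_left_iff[OF d2] using False .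
          have "top_equiv (D (2*p)) (st p (2 * c1 - c2) c1 c3 c4) (canon p)"
            by (rule F1'[OF p pr _ o nd]) (rule P2, simp)
          then show ?thesis using s1 te_trans by blast
        qed
      next
        case d1: True
        then have nd2: "\<not> int p dvd (c2 - c3)" using g by blast
        then have e2: "even (c2 - c3)" using nU2 by blast
        have "p \<noteq> 2" using nd2 e2 by (metis of_nat_numeral)
        then have op: "odd (int p)" using prime_odd2[OF pr] by blast
        show ?thesis
        proof (cases "even (c1 - c2)")
          case False
          have s1: "top_equiv (D (2*p)) (st p c1 c2 c3 c4) (st p c1 (2 * c2 - c3) c2 c4)" by (rule b1[OF p])
          have H: "c1 - (2 * c2 - c3) = (c1 - c2) - (c2 - c3)" by simp
          have o: "odd (c1 - (2 * c2 - c3))" unfolding H using False e2 by simp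
          have nd: "\<not> int p dvd (c1 - (2 * c2 - c3))" unfolding H using d1 nd2 by (metis dvd_diff dvd_minus_iff minus_diff_eq diff_diff_eq2 diff_add_cancel)
          have "top_equiv (D (2*p)) (st p c1 (2 * c2 - c3) c2 c4) (canon p)"
            by (rule F2'[OF p pr _ o nd]) (rule P2, simp)
          then show ?thesis using s1 te_trans by blast
        next
          case e1: True
          have s1: "top_equiv (D (2*p)) (st p c1 c2 c3 c4) (st p c1 c2 (2 * c3 - c4) c3)" by (rule b2[OF p])
          have H: "c2 - (2 * c3 - c4) = (c1 - c2) + (c2 - c3) + int p * (-1 - 2 * m)"
            by (simp add: c4 algebra_simps)
          have o: "odd (c2 - (2 * c3 - c4))" unfolding H using e1 e2 op by simp
          have nd: "\<not> int p dvd (c2 - (2 * c3 - c4))" unfolding H zdvd_reduce dvd_add_right_iff[OF d1] using nd2 .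
          have "top_equiv (D (2*p)) (st p c1 c2 (2 * c3 - c4) c3) (canon p)"
            by (rule F1'[OF p pr _ o nd]) (rule P2, simp)
          then show ?thesis using s1 te_trans by blast
        qed
      qed
    qed
  qed
qed

abbreviation zz :: "nat \<Rightarrow> nat \<times> bool" where "zz p \<equiv> el (2*p) (int p) False"

lemma zz_central: assumes "0 < p" "x \<in> carrier (D (2*p))"
  shows "zz p \<otimes>\<^bsub>D (2*p)\<^esub> x = x \<otimes>\<^bsub>D (2*p)\<^esub> zz p"
  using assms(2)
proof (elim dih_cases)
  fix a e assume x: "x = el (2*p) a e"
  have "2 * int p dvd (int p + a) - (a - int p)" by simp
  then show ?thesis using assms(1) el_cong[of "2*p"] by (auto simp: x el_mult add.commute)
qed

lemma zz_carrier: "0 < p \<Longrightarrow> zz p \<in> carrier (D (2*p))"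
  by (simp add: el_carrier)

lemma zz_inv: assumes "0 < p" shows "inv\<^bsub>D (2*p)\<^esub> (zz p) = zz p"
proof -
  have "2 * int p dvd - int p - int p" by simp
  then show ?thesis using assms el_cong[of "2*p" "- int p" "int p"] by (simp add: inv_el)
qed

lemma list_prod_Cons: "list_prod G (x # xs) = x \<otimes>\<^bsub>G\<^esub> list_prod G xs"
  by (simp add: list_prod_def)

lemma list_prod_Nil: "list_prod G [] = \<one>\<^bsub>G\<^esub>"
  by (simp add: list_prod_def)

lemma list_prod_carrier: "group G \<Longrightarrow> set xs \<subseteq> carrier G \<Longrightarrow> list_prod G xs \<in> carrier G"
  by (induction xs) (auto simp: list_prod_Cons list_prod_Nil group.is_monoid monoid.m_closed monoid.one_closed)

lemma list_prod_central: assumes p: "0 < p" and c: "set xs \<subseteq> carrier (D (2*p))" "set ys \<subseteq> carrier (D (2*p))"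
  shows "list_prod (D (2*p)) (xs @ zz p # ys) = zz p \<otimes>\<^bsub>D (2*p)\<^esub> list_prod (D (2*p)) (xs @ ys)"
  using c(1)
proof (induction xs)
  case Nil then show ?case by (simp add: list_prod_Cons)
next
  case (Cons x xs)
  interpret group "D (2*p)" using group_dih[of "2*p"] p by simp
  have x: "x \<in> carrier (D (2*p))" and xs: "set xs \<subseteq> carrier (D (2*p))" using Cons.prems by auto
  have L: "list_prod (D (2*p)) (xs @ ys) \<in> carrier (D (2*p))"
    by (rule list_prod_carrier) (use xs c(2) in \<open>auto intro: is_group\<close>)
  have "list_prod (D (2*p)) ((x # xs) @ zz p # ys) = x \<otimes>\<^bsub>D (2*p)\<^esub> (zz p \<otimes>\<^bsub>D (2*p)\<^esub> list_prod (D (2*p)) (xs @ ys))"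
    using Cons.IH xs by (simp add: list_prod_Cons)
  also have "\<dots> = (x \<otimes>\<^bsub>D (2*p)\<^esub> zz p) \<otimes>\<^bsub>D (2*p)\<^esub> list_prod (D (2*p)) (xs @ ys)"
    using x L zz_carrier[OF p] by (simp add: m_assoc)
  also have "\<dots> = (zz p \<otimes>\<^bsub>D (2*p)\<^esub> x) \<otimes>\<^bsub>D (2*p)\<^esub> list_prod (D (2*p)) (xs @ ys)"
    using zz_central[OF p x] by simp
  also have "\<dots> = zz p \<otimes>\<^bsub>D (2*p)\<^esub> (x \<otimes>\<^bsub>D (2*p)\<^esub> list_prod (D (2*p)) (xs @ ys))"
    using zz_carrier[OF p] x L by (rule m_assoc)
  finally show ?case by (simp add: list_prod_Cons)
qed

lemma move_central: assumes p: "0 < p" and c: "set ys \<subseteq> carrier (D (2*p))"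
  shows "set xs \<subseteq> carrier (D (2*p)) \<Longrightarrow> top_equiv (D (2*p)) (xs @ zz p # ys) (xs @ ys @ [zz p])"
  using c
proof (induction ys arbitrary: xs)
  case Nil then show ?case by (simp add: te_refl)
next
  case (Cons y ys)
  interpret group "D (2*p)" using group_dih[of "2*p"] p by simp
  have y: "y \<in> carrier (D (2*p))" using Cons.prems by auto
  have "braid_move (D (2*p)) (length xs) (xs @ zz p # y # ys) = xs @ y # zz p # ys"
  proof -
    have "zz p \<otimes>\<^bsub>D (2*p)\<^esub> y \<otimes>\<^bsub>D (2*p)\<^esub> inv\<^bsub>D (2*p)\<^esub> (zz p) = y"
      using zz_central[OF p y] zz_carrier[OF p] y zz_inv[OF p]
      by (metis inv_closed m_assoc r_inv r_one)
    then show ?thesis by (simp add: braid_move_def list_update_append nth_append)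
  qed
  moreover have "top_equiv (D (2*p)) (xs @ zz p # y # ys) (braid_move (D (2*p)) (length xs) (xs @ zz p # y # ys))"
    by (rule te_braid) (use p Cons.prems zz_carrier[OF p] in auto)
  moreover have "top_equiv (D (2*p)) ((xs @ [y]) @ zz p # ys) ((xs @ [y]) @ ys @ [zz p])"
    by (rule Cons.IH) (use Cons.prems in auto)
  ultimately show ?case using te_trans by fastforce
qed

lemma el_one_iff: "0 < n \<Longrightarrow> el n t e = \<one>\<^bsub>dihedral n\<^esub> \<longleftrightarrow> int n dvd t \<and> \<not> e"
  by (simp add: one_dih el_eq_iff mod_eq_0_iff_dvd)

lemma inv_class: assumes p: "0 < p" and x: "x \<in> carrier (D (2*p))" "x \<noteq> \<one>\<^bsub>D (2*p)\<^esub>"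
  "x \<otimes>\<^bsub>D (2*p)\<^esub> x = \<one>\<^bsub>D (2*p)\<^esub>"
  shows "(\<exists>a. x = el (2*p) a True) \<or> x = zz p"
  using x(1)
proof (elim dih_cases)
  fix a e assume xe: "x = el (2*p) a e"
  show ?thesis
  proof (cases e)
    case True then show ?thesis using xe by auto
  next
    case False
    have n: "0 < 2 * p" using p by simp
    from x(3) have H: "el (2*p) (a + a) False = \<one>\<^bsub>D (2*p)\<^esub>" using xe False el_mult[OF n] by simp
    have "2 * int p dvd a + a" using el_one_iff[OF n, THEN iffD1, OF H] by simp
    then obtain k where k: "a + a = 2 * int p * k" by (elim dvdE)
    then have "a = int p * k" by linarith
    then have "int p dvd a" by (rule dvdI)
    then obtain j where j: "a = int p * j" by (elim dvdE)
    have "\<not> 2 * int p dvd a"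
    proof
      assume "2 * int p dvd a"
      then have "el (2*p) a False = \<one>\<^bsub>D (2*p)\<^esub>" using el_one_iff[OF n, THEN iffD2, of a False] by simp
      then show False using x(2) xe False by simp
    qed
    then have "odd j"
    proof (rule contrapos_nn)
      assume "even j"
      then obtain i where "j = 2 * i" by (elim evenE)
      then have "a = 2 * int p * i" using j by simp
      then show "2 * int p dvd a" by (rule dvdI)
    qed
    then obtain i where "j = 2 * i + 1" by (metis oddE)
    then have "2 * int p dvd a - int p" using j by (simp add: algebra_simps)
    then have "x = zz p" using xe False el_cong[OF n] by simp
    then show ?thesis by blast
  qed
qed

lemma snd_mult: "snd (x \<otimes>\<^bsub>D n\<^esub> y) = (snd x \<noteq> snd y)"
  by (cases x; cases y) (simp add: dihedral_def)

lemma snd_list_prod: "snd (list_prod (D n) xs) = foldr (\<lambda>x b. snd x \<noteq> b) xs False"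
  by (induction xs) (simp_all add: list_prod_Cons list_prod_Nil snd_mult, simp add: dihedral_def)

definition HH :: "nat \<Rightarrow> int \<Rightarrow> (nat \<times> bool) set" where
  "HH p c = {x \<in> carrier (D (2*p)). if snd x then int p dvd int (fst x) - c else int p dvd int (fst x)}"

lemma HH_el: assumes "0 < p"
  shows "el (2*p) a e \<in> HH p c \<longleftrightarrow> (if e then int p dvd a - c else int p dvd a)"
proof -
  have f: "int (fst (el (2*p) a e)) = a mod (2 * int p)" using assms by (simp add: el_def)
  have E: "a div (2 * int p) * (2 * int p) + a mod (2 * int p) = a" by (rule div_mult_mod_eq)
  have E2: "a mod (2 * int p) - a = int p * (- 2 * (a div (2 * int p)))"
    using E by (simp add: algebra_simps)
  have d: "int p dvd a mod (2 * int p) - a" unfolding E2 by (rule dvd_triv_left)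
  have e1: "a mod (2 * int p) - c = (a - c) + (a mod (2 * int p) - a)" by simp
  have e2: "a mod (2 * int p) = a + (a mod (2 * int p) - a)" by simp
  have "int p dvd a mod (2 * int p) - c \<longleftrightarrow> int p dvd a - c"
    unfolding e1 dvd_add_left_iff[OF d] ..
  moreover have "int p dvd a mod (2 * int p) \<longleftrightarrow> int p dvd a"
    by (subst e2) (rule dvd_add_left_iff[OF d])
  moreover have s: "snd (el (2*p) a e) = e" by (simp add: el_def)
  moreover have "el (2*p) a e \<in> HH p c \<longleftrightarrow> (if e then int p dvd a mod (2*int p) - c else int p dvd a mod (2*int p))"
    unfolding HH_def mem_Collect_eq f s using el_carrier[of "2*p" a e] assms by simp
  ultimately show ?thesis by simp
qed

lemma notgen: assumes p: "2 \<le> p" and g: "generate (D (2*p)) S = carrier (D (2*p))" and S: "S \<subseteq> HH p c"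
  shows False
proof -
  have p0: "0 < p" using p by simp
  interpret group "D (2*p)" using group_dih[of "2*p"] p0 by simp
  have sg: "subgroup (HH p c) (D (2*p))"
  proof (rule subgroupI)
    show "HH p c \<subseteq> carrier (D (2*p))" by (auto simp: HH_def)
    have "el (2*p) 0 False \<in> HH p c" using HH_el[OF p0] by simp
    then show "HH p c \<noteq> {}" by blast
  next
    fix a assume a: "a \<in> HH p c"
    then have "a \<in> carrier (D (2*p))" by (simp add: HH_def)
    then show "inv\<^bsub>D (2*p)\<^esub> a \<in> HH p c" using a
      by (elim dih_cases) (auto simp: inv_el p0 HH_el)
  next
    fix a b assume a: "a \<in> HH p c" and b: "b \<in> HH p c"
    then have "a \<in> carrier (D (2*p))" "b \<in> carrier (D (2*p))" by (simp_all add: HH_def)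
    then show "a \<otimes>\<^bsub>D (2*p)\<^esub> b \<in> HH p c" using a b
    proof (elim dih_cases)
      fix x e y f assume ax: "a = el (2*p) x e" and bb: "b = el (2*p) y f"
        and a: "a \<in> HH p c" and b: "b \<in> HH p c"
      from a b have A: "if e then int p dvd x - c else int p dvd x" and B: "if f then int p dvd y - c else int p dvd y"
        using HH_el[OF p0] ax bb by auto
      have "if e \<noteq> f then int p dvd (if e then x - y else x + y) - c else int p dvd (if e then x - y else x + y)"
      proof (cases e; cases f)
        assume "e" "f" then show ?thesis using A B dvd_diff[of "int p" "x - c" "y - c"] by simp
      next
        assume "e" "\<not>f" then show ?thesis using A B dvd_diff[of "int p" "x - c" "y"] by (simp add: algebra_simps)
      next
        assume "\<not>e" "f" then show ?thesis using A B dvd_add[of "int p" "x" "y - c"] by (simp add: algebra_simps)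
      next
        assume "\<not>e" "\<not>f" then show ?thesis using A B by simp
      qed
      then show ?thesis using ax bb by (simp add: el_mult p0 HH_el)
    qed
  qed
  have "carrier (D (2*p)) \<subseteq> HH p c" using g generate_subgroup_incl[OF S sg] by simp
  moreover have "el (2*p) 1 False \<in> carrier (D (2*p))" using el_carrier p0 by simp
  moreover have "el (2*p) 1 False \<notin> HH p c" using HH_el[OF p0] p by simp
  ultimately show False by blast
qed


lemma bad: assumes p2: "2 \<le> p" and g: "generate (D (2*p)) S = carrier (D (2*p))"
  and S: "S \<subseteq> {el (2*p) a True, el (2*p) b True, zz p}"
  and X: "t mod (2 * int p) = 0" and d: "int p dvd t - (a - b)"
  shows Q
proof -
  have p0: "0 < p" using p2 by simp
  have "2 * int p dvd t" using X by (simp add: mod_eq_0_iff_dvd)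
  then have td: "int p dvd t" by (rule dvd_mult_right)
  have "int p dvd t - (t - (a - b))" using dvd_diff[OF td d] .
  then have ab: "int p dvd a - b" by simp
  have "int p dvd - (a - b)" using ab by (simp only: dvd_minus_iff)
  then have ba: "int p dvd b - a" by simp
  have "S \<subseteq> HH p a" using S ba by (auto simp: HH_el[OF p0])
  then show ?thesis using notgen[OF p2 g] by blast
qed

lemma mainT: assumes pr: "Factorial_Ring.prime p"
  and X: "2 * int p dvd (a1 - a2 + a3 - a4 + int p)"
  and g: "generate (D (2*p)) {el (2*p) a1 True, el (2*p) a2 True, el (2*p) a3 True, el (2*p) a4 True, zz p} = carrier (D (2*p))"
  shows "top_equiv (D (2*p)) (st p a1 a2 a3 a4) (canon p)"
proof -
  have p2: "2 \<le> p" using pr by (simp add: prime_ge_2_nat)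
  have p0: "0 < p" using p2 by simp
  have P: "2 * int p dvd (a1 - a2 + a3 - a4 - int p)"
  proof -
    have H: "a1 - a2 + a3 - a4 - int p = (a1 - a2 + a3 - a4 + int p) - 2 * int p" by simp
    show ?thesis unfolding H using dvd_diff[OF X dvd_refl[of "2 * int p"]] .
  qed
  show ?thesis
  proof (cases "int p dvd (a1 - a2) \<and> int p dvd (a2 - a3)")
    case False then show ?thesis using F3[OF p0 pr P] by blast
  next
    case True
    then have d1: "int p dvd a1 - a2" and d2: "int p dvd a2 - a3" by auto
    have pP: "int p dvd (a1 - a2 + a3 - a4 - int p)" using P by (rule dvd_mult_right)
    have "int p dvd - (a1 - a2)" using d1 by (simp only: dvd_minus_iff)
    then have e21: "int p dvd a2 - a1" by simp
    have e31: "int p dvd a3 - a1"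
    proof -
      have "a3 - a1 = - ((a1 - a2) + (a2 - a3))" by simp
      moreover have "int p dvd - ((a1 - a2) + (a2 - a3))" using dvd_add[OF d1 d2] by (simp only: dvd_minus_iff)
      ultimately show ?thesis by simp
    qed
    have e41: "int p dvd a4 - a1"
    proof -
      have "a4 - a1 = (a3 - a1) - (a1 - a2 + a3 - a4 - int p) + (a1 - a2) - int p" by simp
      moreover have "int p dvd (a3 - a1) - (a1 - a2 + a3 - a4 - int p) + (a1 - a2) - int p"
        by (intro dvd_diff dvd_add e31 pP d1 dvd_refl)
      ultimately show ?thesis by simp
    qed
    have "{el (2*p) a1 True, el (2*p) a2 True, el (2*p) a3 True, el (2*p) a4 True, zz p} \<subseteq> HH p a1"
      using e21 e31 e41 by (simp add: HH_el[OF p0])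
    then show ?thesis using notgen[OF p2 g] by blast
  qed
qed

lemma main4: assumes pr: "Factorial_Ring.prime p"
  and y1: "(\<exists>a. y1 = el (2*p) a True) \<or> y1 = zz p"
  and y2: "(\<exists>a. y2 = el (2*p) a True) \<or> y2 = zz p"
  and y3: "(\<exists>a. y3 = el (2*p) a True) \<or> y3 = zz p"
  and y4: "(\<exists>a. y4 = el (2*p) a True) \<or> y4 = zz p"
  and prod: "list_prod (D (2*p)) [y1, y2, y3, y4, zz p] = \<one>\<^bsub>D (2*p)\<^esub>"
  and gen: "generate (D (2*p)) (set [y1, y2, y3, y4, zz p]) = carrier (D (2*p))"
  shows "top_equiv (D (2*p)) [y1, y2, y3, y4, zz p] (canon p)"
proof -
  have p2: "2 \<le> p" using pr by (simp add: prime_ge_2_nat)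
  have p0: "0 < p" and n0: "0 < 2 * p" using p2 by auto
  show ?thesis
  using y1 y2 y3 y4 prod gen
  apply (elim disjE exE)
  apply (simp_all add: list_prod_Cons list_prod_Nil el_mult[OF n0] one_dih el_eq_iff[OF n0] p0)
  subgoal for a1 a2 a3 a4
    apply (rule mainT[OF pr, of a1 a2 a3 a4, unfolded st_def])
     apply (simp add: mod_eq_0_iff_dvd algebra_simps)
    apply assumption
    done
  subgoal for a b
    apply (rule bad[OF p2, where a=a and b=b])
    apply assumption
    apply auto[1]
    apply assumption
    apply (simp add: algebra_simps)
    done
  subgoal for a b
    apply (rule bad[OF p2, where a=a and b=b])
    apply assumption
    apply auto[1]
    apply assumption
    apply (simp add: algebra_simps)
    done
  subgoal for a b
    apply (rule bad[OF p2, where a=a and b=b])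
    apply assumption
    apply auto[1]
    apply assumption
    apply (simp add: algebra_simps)
    done
  subgoal for a b
    apply (rule bad[OF p2, where a=a and b=b])
    apply assumption
    apply auto[1]
    apply assumption
    apply (simp add: algebra_simps)
    done
  subgoal for a b
    apply (rule bad[OF p2, where a=a and b=b])
    apply assumption
    apply auto[1]
    apply assumption
    apply (simp add: algebra_simps)
    done
  subgoal for a b
    apply (rule bad[OF p2, where a=a and b=b])
    apply assumption
    apply auto[1]
    apply assumption
    apply (simp add: algebra_simps)
    done
  using p0 by simp
qed

lemma srot_el: assumes "0 < n" shows "srot n k = el n (- int k) True"
proof -
  have "int ((n - k mod n) mod n) = (- int k) mod int n"
  proof -
    have "k mod n \<le> n" using assms by (simp add: less_imp_le)
    then have "int ((n - k mod n) mod n) = (int n - int k mod int n) mod int n"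
      by (simp add: of_nat_mod of_nat_diff zmod_int)
    also have "\<dots> = (- int k) mod int n" by (simp add: mod_diff_eq[symmetric] mod_simps)
    finally show ?thesis .
  qed
  then have H: "(n - k mod n) mod n = nat ((- int k) mod int n)" by (metis nat_int)
  show ?thesis unfolding srot_def el_def by (simp only: H)
qed

lemma rot_el: "rot n k = el n (int k) False"
  by (simp add: rot_def el_def flip: zmod_int)

lemma len5: "length v = 5 \<Longrightarrow> \<exists>a b c d e. v = [a, b, c, d, e]"
  by (auto simp: length_Suc_conv numeral_eq_Suc)

lemma len4: "length v = 4 \<Longrightarrow> \<exists>a b c d. v = [a, b, c, d]"
  by (auto simp: length_Suc_conv numeral_eq_Suc)

lemma main: assumes pr: "Factorial_Ring.prime p" and gv: "gen_vector_02222 (D (2*p)) v"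
  shows "top_equiv (D (2*p)) v (canon p)"
proof -
  have p2: "2 \<le> p" using pr by (simp add: prime_ge_2_nat)
  have p0: "0 < p" and n0: "0 < 2 * p" using p2 by auto
  from gv have len: "length v = 5" and sub: "set v \<subseteq> carrier (D (2*p))"
    and inv: "\<forall>x\<in>set v. x \<noteq> \<one>\<^bsub>D (2*p)\<^esub> \<and> x \<otimes>\<^bsub>D (2*p)\<^esub> x = \<one>\<^bsub>D (2*p)\<^esub>"
    and prod: "list_prod (D (2*p)) v = \<one>\<^bsub>D (2*p)\<^esub>"
    and gen: "generate (D (2*p)) (set v) = carrier (D (2*p))"
    unfolding gen_vector_02222_def by auto
  have cls: "\<And>x. x \<in> set v \<Longrightarrow> (\<exists>a. x = el (2*p) a True) \<or> x = zz p"
    using inv_class[OF p0] sub inv by blast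
  have zin: "zz p \<in> set v"
  proof (rule ccontr)
    assume nz: "zz p \<notin> set v"
    have sv: "snd x" if xv: "x \<in> set v" for x
    proof -
      obtain a where "x = el (2*p) a True" using cls[OF xv] nz xv by blast
      then show ?thesis by (simp add: el_def)
    qed
    obtain x0 x1 x2 x3 x4 where v: "v = [x0, x1, x2, x3, x4]" using len5[OF len] by blast
    have "snd (list_prod (D (2*p)) v) = True"
      unfolding snd_list_prod using sv v by simp
    moreover have "snd (\<one>\<^bsub>D (2*p)\<^esub>) = False" by (simp add: one_dih el_def)
    ultimately show False using prod by simp
  qed
  then obtain k where k: "k < length v" "v ! k = zz p" by (auto simp: in_set_conv_nth)
  define xs where "xs = take k v"
  define ys where "ys = drop (Suc k) v"
  have vdec: "v = xs @ zz p # ys" unfolding xs_def ys_def using id_take_nth_drop[OF k(1)] k(2) by simp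
  have xsc: "set xs \<subseteq> carrier (D (2*p))" and ysc: "set ys \<subseteq> carrier (D (2*p))"
    using sub vdec by auto
  have te1: "top_equiv (D (2*p)) v (xs @ ys @ [zz p])"
    using move_central[OF p0 ysc xsc] vdec by simp
  have "list_prod (D (2*p)) v = zz p \<otimes>\<^bsub>D (2*p)\<^esub> list_prod (D (2*p)) (xs @ ys)"
    using list_prod_central[OF p0 xsc ysc] vdec by simp
  moreover have "list_prod (D (2*p)) ((xs @ ys) @ zz p # []) = zz p \<otimes>\<^bsub>D (2*p)\<^esub> list_prod (D (2*p)) ((xs @ ys) @ [])"
    by (rule list_prod_central[OF p0]) (use xsc ysc in auto)
  ultimately have prod2: "list_prod (D (2*p)) (xs @ ys @ [zz p]) = \<one>\<^bsub>D (2*p)\<^esub>" using prod by simp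
  have set2: "set (xs @ ys @ [zz p]) = set v" using vdec by auto
  have "length (xs @ ys) = 4" using vdec len by simp
  then obtain y1 y2 y3 y4 where ys4: "xs @ ys = [y1, y2, y3, y4]" using len4 by blast
  have ssub: "set (xs @ ys) \<subseteq> set v" by (subst vdec) auto
  have yin: "y1 \<in> set v" "y2 \<in> set v" "y3 \<in> set v" "y4 \<in> set v"
    using ssub unfolding ys4 by auto
  have w: "xs @ ys @ [zz p] = [y1, y2, y3, y4, zz p]"
  proof -
    have "xs @ ys @ [zz p] = (xs @ ys) @ [zz p]" by (rule append_assoc[symmetric])
    also have "\<dots> = [y1, y2, y3, y4] @ [zz p]" by (simp only: ys4)
    also have "\<dots> = [y1, y2, y3, y4, zz p]" by simp
    finally show ?thesis .
  qed
  have prod3: "list_prod (D (2*p)) [y1, y2, y3, y4, zz p] = \<one>\<^bsub>D (2*p)\<^esub>" using prod2 unfolding w .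
  have set3: "set [y1, y2, y3, y4, zz p] = set v" using set2 unfolding w .
  have gen3: "generate (D (2*p)) (set [y1, y2, y3, y4, zz p]) = carrier (D (2*p))" unfolding set3 by (rule gen)
  have "top_equiv (D (2*p)) [y1, y2, y3, y4, zz p] (canon p)"
    by (rule main4[OF pr cls[OF yin(1)] cls[OF yin(2)] cls[OF yin(3)] cls[OF yin(4)] prod3 gen3])
  moreover have "top_equiv (D (2*p)) v [y1, y2, y3, y4, zz p]" using te1 unfolding w .
  ultimately show ?thesis using te_trans by blast
qed

lemma canon_gen: assumes p0: "0 < p" shows "gen_vector_02222 (D (2*p)) (canon p)"
proof -
  have n0: "0 < 2 * p" using p0 by simp
  interpret group "D (2*p)" using group_dih[OF n0] .
  have len: "length (canon p) = 5" by (simp add: canon_def st_def)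
  have sub: "set (canon p) \<subseteq> carrier (D (2*p))" unfolding canon_def by (rule st_carrier[OF p0])
  have z1: "zz p \<noteq> \<one>\<^bsub>D (2*p)\<^esub>"
  proof
    assume "zz p = \<one>\<^bsub>D (2*p)\<^esub>"
    then have "2 * int p dvd int p" using el_one_iff[OF n0, THEN iffD1] by simp
    then obtain k where "int p = 2 * int p * k" by (elim dvdE)
    then have "int p * (2 * k - 1) = 0" by (simp add: algebra_simps)
    then have "2 * k = 1" using p0 by simp
    then show False by presburger
  qed
  have z2: "zz p \<otimes>\<^bsub>D (2*p)\<^esub> zz p = \<one>\<^bsub>D (2*p)\<^esub>"
    using el_one_iff[OF n0, THEN iffD2, of "int p + int p" False] by (simp add: el_mult[OF n0])
  have r: "\<And>a. el (2*p) a True \<noteq> \<one>\<^bsub>D (2*p)\<^esub> \<and> el (2*p) a True \<otimes>\<^bsub>D (2*p)\<^esub> el (2*p) a True = \<one>\<^bsub>D (2*p)\<^esub>"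
    by (simp add: el_mult[OF n0] one_dih el_eq_iff[OF n0])
  have inv: "\<forall>x\<in>set (canon p). x \<noteq> \<one>\<^bsub>D (2*p)\<^esub> \<and> x \<otimes>\<^bsub>D (2*p)\<^esub> x = \<one>\<^bsub>D (2*p)\<^esub>"
    using r z1 z2 by (simp add: canon_def st_def)
  have prod: "list_prod (D (2*p)) (canon p) = \<one>\<^bsub>D (2*p)\<^esub>"
  proof -
    have "list_prod (D (2*p)) (canon p) = el (2*p) (0 - (0 - (- (int p + 1) - (- 1 - (int p + 0))))) False"
      by (simp add: canon_def st_def list_prod_Cons list_prod_Nil one_dih el_mult[OF n0])
    also have "\<dots> = \<one>\<^bsub>D (2*p)\<^esub>" by (simp add: one_dih)
    finally show ?thesis .
  qed
  have gen: "generate (D (2*p)) (set (canon p)) = carrier (D (2*p))"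
  proof
    show "generate (D (2*p)) (set (canon p)) \<subseteq> carrier (D (2*p))"
      by (rule generate_incl[OF sub])
  next
    let ?G = "generate (D (2*p)) (set (canon p))"
    have s0: "el (2*p) 0 True \<in> ?G" by (rule generate.incl) (simp add: canon_def st_def)
    have s1: "el (2*p) (-1) True \<in> ?G" by (rule generate.incl) (simp add: canon_def st_def)
    have r1: "el (2*p) 1 False \<in> ?G"
      using generate.eng[OF s0 s1] by (simp add: el_mult[OF n0])
    have rk: "el (2*p) (int k) False \<in> ?G" for k
    proof (induction k)
      case 0 then show ?case using generate.one[of "D (2*p)"] by (simp add: one_dih)
    next
      case (Suc k)
      then show ?case using generate.eng[OF Suc r1] by (simp add: el_mult[OF n0] add.commute)
    qed
    show "carrier (D (2*p)) \<subseteq> ?G"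
    proof
      fix x assume "x \<in> carrier (D (2*p))"
      then have x: "x = el (2*p) (int (fst x)) (snd x)" by (rule carrier_el)
      show "x \<in> ?G"
      proof (cases "snd x")
        case True
        have "el (2*p) (int (fst x)) False \<otimes>\<^bsub>D (2*p)\<^esub> el (2*p) 0 True \<in> ?G"
          by (rule generate.eng[OF rk s0])
        then show ?thesis using x True by (simp add: el_mult[OF n0])
      next
        case False
        show ?thesis by (subst x) (simp add: False rk)
      qed
    qed
  qed
  show ?thesis unfolding gen_vector_02222_def using len sub inv prod gen by blast
qed

lemma stmt_vec: assumes "1 \<le> p"
  shows "[srot (2 * p) 0, srot (2 * p) 0, srot (2 * p) (p + 1), srot (2 * p) 1, rot (2 * p) p] = canon p"
  using assms by (simp add: srot_el rot_el canon_def st_def algebra_simps)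


theorem proposition2:
  fixes g :: nat
  assumes "g \<ge> 2"
  shows "(\<exists>v. gen_vector_02222 (dihedral (2 * (g - 1))) v)
    \<and> (Factorial_Ring.prime (g - 1) \<longrightarrow>
         (\<forall>v w. gen_vector_02222 (dihedral (2 * (g - 1))) v
             \<longrightarrow> gen_vector_02222 (dihedral (2 * (g - 1))) w
             \<longrightarrow> top_equiv (dihedral (2 * (g - 1))) v w)
       \<and> gen_vector_02222 (dihedral (2 * (g - 1)))
            [srot (2 * (g - 1)) 0, srot (2 * (g - 1)) 0, srot (2 * (g - 1)) g,
             srot (2 * (g - 1)) 1, rot (2 * (g - 1)) (g - 1)]
       \<and> (\<forall>v. gen_vector_02222 (dihedral (2 * (g - 1))) v
             \<longrightarrow> top_equiv (dihedral (2 * (g - 1))) v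
                  [srot (2 * (g - 1)) 0, srot (2 * (g - 1)) 0, srot (2 * (g - 1)) g,
                   srot (2 * (g - 1)) 1, rot (2 * (g - 1)) (g - 1)]))"
proof -
  define p where "p = g - 1"
  have p1: "1 \<le> p" and p0: "0 < p" using assms by (auto simp: p_def)
  have gp: "g = p + 1" using assms by (simp add: p_def)
  have vec: "[srot (2 * (g - 1)) 0, srot (2 * (g - 1)) 0, srot (2 * (g - 1)) g,
             srot (2 * (g - 1)) 1, rot (2 * (g - 1)) (g - 1)] = canon p"
    using stmt_vec[OF p1] by (simp add: gp)
  have Dp: "2 * (g - 1) = 2 * p" by (simp add: p_def)
  have pp: "g - 1 = p" by (simp add: p_def)
  have part1: "\<exists>v. gen_vector_02222 (D (2 * p)) v" using canon_gen[OF p0] by blast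
  have part2: "Factorial_Ring.prime p \<Longrightarrow>
      (\<forall>v w. gen_vector_02222 (D (2 * p)) v \<longrightarrow> gen_vector_02222 (D (2 * p)) w \<longrightarrow> top_equiv (D (2 * p)) v w)
      \<and> gen_vector_02222 (D (2 * p)) (canon p)
      \<and> (\<forall>v. gen_vector_02222 (D (2 * p)) v \<longrightarrow> top_equiv (D (2 * p)) v (canon p))"
  proof -
    assume pr: "Factorial_Ring.prime p"
    have m: "\<And>v. gen_vector_02222 (D (2 * p)) v \<Longrightarrow> top_equiv (D (2 * p)) v (canon p)"
      by (rule main[OF pr])
    have "\<And>v w. gen_vector_02222 (D (2 * p)) v \<Longrightarrow> gen_vector_02222 (D (2 * p)) w \<Longrightarrow> top_equiv (D (2 * p)) v w"
      using m te_sym te_trans by metis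
    then show ?thesis using m canon_gen[OF p0] by blast
  qed
  show ?thesis unfolding vec unfolding Dp pp using part1 part2 by blast
qed

end
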